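(* Let $N>1$ be an integer, $0<\epsilon<e$, $\tfrac12<\beta<1$, and $K=\lceil \log_{1/\beta}(N)\rceil\cdot\lceil \log(e/\epsilon)/\log(\beta/(1-\beta))\rceil$. Let $H$ be the $(N+1)\times(N+1)$ matrix with $H_{jk}=\Lambda\!\left(\tfrac{j+k}{2}\right)$, $0\le j,k\le N$, where $\Lambda(z)=\Gamma(z+1/2)/\Gamma(z+1)$. Then there is an $(N+1)\times(N+1)$ real matrix $\tilde H$ of rank at most $K+1$ such that $\max_{0\le j,k\le N}|H_{jk}-\tilde H_{jk}|\le\epsilon$.
   Context: $\Gamma$ denotes the gamma function; $e$ is Euler's number; $\log$ is the natural logarithm. *)

theory Defs
  imports "HOL-Analysis.Analysis" "Jordan_Normal_Form.DL_Rank"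
begin

definition Lambda :: "real \<Rightarrow> real" where
  "Lambda z = Gamma (z + 1/2) / Gamma (z + 1)"

end

theory Submission
  imports Defs
begin

definition wt :: "real \<Rightarrow> real" where
  "wt t = t powr (-1/2) * (1-t) powr (-1/2) / sqrt pi"

lemma Beta_Ioo:
  fixes a b :: real assumes "0 < a" "0 < b"
  shows "((\<lambda>x. x powr (a - 1) * (1 - x) powr (b - 1)) has_integral Beta a b) {0<..<1}"
  using has_integral_Beta_real[of a b] assms by (simp add: has_integral_Icc_iff_Ioo)

lemma Beta_Lambda:
  assumes "0 \<le> z"
  shows "Beta (z+1/2) (1/2) / sqrt pi = Lambda z"
proof -
  have e: "z + 1/2 + 1/2 = z + 1" by simp
  have "Beta (z+1/2) (1/2) = Gamma (z+1/2) * sqrt pi * inverse (Gamma (z + 1))"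
    by (simp only: Beta_altdef e Gamma_one_half_real rGamma_inverse_Gamma)
  moreover have aux: "(a * s * inverse b) / s = a / b" if "s \<noteq> 0" for a b s :: real
    using that by (simp add: divide_inverse)
  moreover have "sqrt pi \<noteq> 0" by simp
  ultimately show ?thesis unfolding Lambda_def by metis
qed

lemma Lambda_int:
  assumes "0 \<le> z"
  shows "((\<lambda>t. t powr z * wt t) has_integral Lambda z) {0<..<1}"
proof -
  have "((\<lambda>t. t powr (z + 1/2 - 1) * (1 - t) powr (1/2 - 1)) has_integral Beta (z+1/2) (1/2)) {0<..<1}"
    by (rule Beta_Ioo) (use assms in auto)
  then have "((\<lambda>t. (t powr (z + 1/2 - 1) * (1 - t) powr (1/2 - 1)) / sqrt pi) has_integral Beta (z+1/2) (1/2) / sqrt pi) {0<..<1}"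
    by (rule has_integral_divide)
  then have 1: "((\<lambda>t. (t powr (z + 1/2 - 1) * (1 - t) powr (1/2 - 1)) / sqrt pi) has_integral Lambda z) {0<..<1}"
    unfolding Beta_Lambda[OF assms] .
  have 2: "t powr (z + 1/2 - 1) * (1 - t) powr (1/2 - 1) / sqrt pi = t powr z * wt t" if "t \<in> {0<..<1}" for t
  proof -
    have e1: "z + 1/2 - 1 = z + (-1/2)" "(1/2 - 1::real) = -1/2" by simp_all
    have "t powr (z + 1/2 - 1) = t powr z * t powr (-1/2)"
      unfolding e1 by (rule powr_add)
    then show ?thesis unfolding wt_def e1 by simp
  qed
  show ?thesis
    using has_integral_cong[of "{0<..<1}" "\<lambda>t. t powr (z + 1/2 - 1) * (1 - t) powr (1/2 - 1) / sqrt pi" "\<lambda>t. t powr z * wt t"] 1 2 by blast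
qed

lemma wt_int: "(wt has_integral sqrt pi) {0<..<1}"
proof -
  have "((\<lambda>t. t powr 0 * wt t) has_integral Lambda 0) {0<..<1}" by (rule Lambda_int) simp
  moreover have "Lambda 0 = sqrt pi" by (simp add: Lambda_def Gamma_one_half_real)
  moreover have "\<forall>t\<in>{0<..<1}. t powr 0 * wt t = wt t" by simp
  ultimately show ?thesis using has_integral_cong[of "{0<..<1}" "\<lambda>t. t powr 0 * wt t" wt] by simp
qed

lemma wt_nonneg: "0 \<le> wt t" by (simp add: wt_def)

lemma pow_fact_le_exp:
  fixes x :: real assumes "0 \<le> x" shows "x ^ n / fact n \<le> exp x"
proof -
  obtain t where t: "\<bar>t\<bar> \<le> \<bar>x\<bar>" "exp x = (\<Sum>m<Suc n. (x ^ m) / fact m) + (exp t / fact (Suc n)) * x ^ Suc n"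
    using Maclaurin_exp_le[of x "Suc n"] by blast
  have "x ^ n / fact n \<le> (\<Sum>m<Suc n. (x ^ m) / fact m)"
    using assms by (intro member_le_sum) auto
  moreover have "0 \<le> (exp t / fact (Suc n)) * x ^ Suc n" using assms by simp
  ultimately show ?thesis using t by linarith
qed

lemma exp_taylor_rem:
  fixes y :: real assumes "0 \<le> y"
  shows "0 \<le> exp y - (\<Sum>m<n. y^m / fact m)" "exp y - (\<Sum>m<n. y^m / fact m) \<le> y^n / fact n * exp y"
proof -
  obtain t where t: "\<bar>t\<bar> \<le> \<bar>y\<bar>" "exp y = (\<Sum>m<n. (y ^ m) / fact m) + (exp t / fact n) * y ^ n"
    using Maclaurin_exp_le[of y n] by blast
  have "0 \<le> (exp t / fact n) * y ^ n" using assms by simp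
  then show "0 \<le> exp y - (\<Sum>m<n. y^m / fact m)" using t by linarith
  have "t \<le> y" using t assms by linarith
  then have "exp t \<le> exp y" by simp
  then have "(exp t / fact n) * y ^ n \<le> y^n / fact n * exp y"
    using assms by (simp add: divide_right_mono mult_right_mono field_simps)
  then show "exp y - (\<Sum>m<n. y^m / fact m) \<le> y^n / fact n * exp y" using t by linarith
qed



lemma c1: "continuous_on {0<..<1::real} (\<lambda>t. (- ln t) ^ r)"
  by (rule continuous_on_power, rule continuous_on_minus, rule continuous_on_ln, rule continuous_on_id) auto
lemma c2: "continuous_on {0<..<1::real} (\<lambda>t. t powr a)"
  by (rule continuous_on_powr, rule continuous_on_id, rule continuous_on_const) auto
lemma c3: "continuous_on {0<..<1::real} wt"
  unfolding wt_def
  apply (rule continuous_on_divide)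
  apply (rule continuous_on_mult)
  apply (rule continuous_on_powr, rule continuous_on_id, rule continuous_on_const, simp)
  apply (rule continuous_on_powr, rule continuous_on_diff, rule continuous_on_const, rule continuous_on_id, rule continuous_on_const, simp)
  apply (rule continuous_on_const)
  by simp

lemma Ioo_leb: "{0<..<(1::real)} \<in> sets lebesgue" by simp

lemma ln_pow_bound:
  fixes t :: real assumes "0 < t" "t \<le> 1"
  shows "(- ln t) ^ r \<le> 2 ^ r * fact r * t powr (-1/2)"
proof -
  have "0 \<le> - ln t / 2" using assms by simp
  from pow_fact_le_exp[OF this, of r]
  have "(- ln t / 2) ^ r / fact r \<le> exp (- ln t / 2)" .
  moreover have "exp (- ln t / 2) = t powr (-1/2)" using assms by (simp add: powr_def)
  ultimately have "(- ln t / 2) ^ r \<le> fact r * t powr (-1/2)"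
    by (simp add: divide_le_eq mult.commute)
  then have "2^r * (- ln t / 2) ^ r \<le> 2^r * (fact r * t powr (-1/2))"
    by (intro mult_left_mono) auto
  moreover have "(- ln t)^r = 2^r * (- ln t / 2)^r"
    by (simp add: power_mult_distrib[symmetric])
  ultimately show ?thesis by (simp add: mult.assoc)
qed

lemma g_bound:
  fixes t a :: real assumes "0 < t" "t < 1" "1/2 \<le> a"
  shows "\<bar>(- ln t) ^ r * t powr a * wt t\<bar> \<le> 2 ^ r * fact r * wt t"
proof -
  have nn: "0 \<le> (- ln t) ^ r" using assms by simp
  have "t powr a \<le> t powr (1/2)" using assms by (intro powr_mono') auto
  have "(- ln t) ^ r * t powr a \<le> 2 ^ r * fact r * t powr (-1/2) * t powr (1/2)"
    using ln_pow_bound[of t r] assms \<open>t powr a \<le> t powr (1/2)\<close> nn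
    by (intro mult_mono) auto
  also have "\<dots> = 2 ^ r * fact r" using assms by (simp add: mult.assoc powr_add[symmetric])
  finally have "(- ln t) ^ r * t powr a \<le> 2 ^ r * fact r" .
  then have "(- ln t) ^ r * t powr a * wt t \<le> 2 ^ r * fact r * wt t"
    by (intro mult_right_mono wt_nonneg)
  moreover have "0 \<le> (- ln t) ^ r * t powr a * wt t" using nn wt_nonneg by simp
  ultimately show ?thesis by simp
qed

lemma g_int:
  fixes a :: real assumes "1/2 \<le> a"
  shows "(\<lambda>t. (- ln t) ^ r * t powr a * wt t) integrable_on {0<..<1}"
proof (rule measurable_bounded_by_integrable_imp_integrable)
  show "(\<lambda>t. (- ln t) ^ r * t powr a * wt t) \<in> borel_measurable (lebesgue_on {0<..<1})"
  proof (rule continuous_imp_measurable_on_sets_lebesgue[OF _ Ioo_leb])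
    show "continuous_on {0<..<1} (\<lambda>t. (- ln t) ^ r * t powr a * wt t)"
      using c1 c2 c3 by (intro continuous_on_mult)
  qed
  show "(\<lambda>t. 2 ^ r * fact r * wt t) integrable_on {0<..<1}"
    using has_integral_mult_right[OF wt_int, of "2 ^ r * fact r"] by (auto intro: has_integral_integrable)
  show "norm ((- ln t) ^ r * t powr a * wt t) \<le> 2 ^ r * fact r * wt t" if "t \<in> {0<..<1}" for t
    using g_bound[of t a r] that assms by auto
qed (rule Ioo_leb)



lemma pointwise:
  fixes t j k c \<beta> :: real and M :: nat
  assumes t: "0 < t" "t < 1" and b: "0 < \<beta>" "\<beta> < 1" and j: "0 \<le> j" "\<beta> * c \<le> j" "j \<le> c" and k: "0 \<le> k"
  shows "\<bar>t powr ((j+k)/2) - (\<Sum>r<M. ((c - j)/2)^r / fact r * ((- ln t)^r * t powr ((c+k)/2)))\<bar> \<le> ((1-\<beta>)/\<beta>)^M"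
proof -
  define s where "s = - ln t"
  define d where "d = (c - j)/2"
  define a where "a = (c+k)/2"
  define q where "q = (1-\<beta>)/\<beta>"
  define y where "y = d * s"
  have s0: "0 \<le> s" using t by (simp add: s_def)
  have d0: "0 \<le> d" using j by (simp add: d_def)
  have y0: "0 \<le> y" using s0 d0 by (simp add: y_def)
  have q0: "0 \<le> q" using b by (simp add: q_def)
  have h1: "t powr ((j+k)/2) = t powr a * exp y"
  proof -
    have "t powr a * exp y = exp (a * ln t) * exp (d * s)" using t by (simp add: powr_def y_def)
    also have "\<dots> = exp (a * ln t + d * s)" by (simp add: exp_add)
    also have "a * ln t + d * s = (j+k)/2 * ln t" by (simp add: a_def d_def s_def field_simps)
    finally show ?thesis using t by (simp add: powr_def)
  qed
  have h2: "(\<Sum>r<M. d^r / fact r * (s^r * t powr a)) = t powr a * (\<Sum>r<M. y^r / fact r)"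
    by (simp add: sum_distrib_left y_def power_mult_distrib mult_ac)
  define D where "D = exp y - (\<Sum>r<M. y^r / fact r)"
  have D0: "0 \<le> D" and D1: "D \<le> y^M / fact M * exp y"
    using exp_taylor_rem[OF y0, of M] by (simp_all add: D_def)
  have diff: "t powr ((j+k)/2) - (\<Sum>r<M. d^r / fact r * (s^r * t powr a)) = t powr a * D"
    unfolding h1 h2 D_def by (simp add: algebra_simps)
  have ta: "0 \<le> t powr a" by simp
  have "d \<le> q * (j / 2)"
  proof -
    have "c \<le> j / \<beta>" using j b by (simp add: field_simps)
    then have "c - j \<le> j / \<beta> - j" by simp
    also have "j / \<beta> - j = q * j" using b by (simp add: q_def field_simps)
    finally show ?thesis by (simp add: d_def)
  qed
  then have "d * s \<le> q * (j / 2) * s" using s0 by (rule mult_right_mono)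
  then have yle: "y \<le> q * (j * s / 2)" by (simp add: y_def)
  have js0: "0 \<le> j * s / 2" using j s0 by simp
  have "y ^ M \<le> (q * (j * s / 2)) ^ M" by (rule power_mono[OF yle y0])
  also have "\<dots> = q^M * (j * s / 2)^M" by (rule power_mult_distrib)
  finally have yM: "y^M / fact M \<le> q^M * ((j * s / 2)^M / fact M)" by (simp add: divide_right_mono)
  have "(j * s / 2)^M / fact M \<le> exp (j * s / 2)" by (rule pow_fact_le_exp[OF js0])
  then have yM2: "y^M / fact M \<le> q^M * exp (j * s / 2)"
    using yM q0 by (meson mult_left_mono order_trans zero_le_power)
  have "t powr a * D \<le> t powr a * (y^M / fact M * exp y)"
    using D1 ta by (rule mult_left_mono)
  also have "\<dots> = t powr ((j+k)/2) * (y^M / fact M)" unfolding h1 by (simp add: mult_ac)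
  also have "\<dots> \<le> t powr ((j+k)/2) * (q^M * exp (j * s / 2))"
    using yM2 by (intro mult_left_mono) simp_all
  also have "t powr ((j+k)/2) * exp (j * s / 2) = t powr (k/2)"
  proof -
    have "t powr ((j+k)/2) * exp (j * s / 2) = exp ((j+k)/2 * ln t + j * s / 2)"
      using t by (simp add: powr_def exp_add)
    also have "(j+k)/2 * ln t + j * s / 2 = k/2 * ln t" by (simp add: s_def field_simps)
    finally show ?thesis using t by (simp add: powr_def)
  qed
  then have "t powr ((j+k)/2) * (q^M * exp (j * s / 2)) = q^M * t powr (k/2)"
    by (metis mult.left_commute)
  also have "\<dots> \<le> q^M * 1"
    using t k q0 by (intro mult_left_mono) (auto intro: powr_le1)
  finally have up: "t powr a * D \<le> q^M" by simp
  have lo: "0 \<le> t powr a * D" using ta D0 by simp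
  have eqs: "(\<Sum>r<M. ((c - j)/2)^r / fact r * ((- ln t)^r * t powr ((c+k)/2))) = (\<Sum>r<M. d^r / fact r * (s^r * t powr a))"
    by (simp add: d_def s_def a_def)
  show ?thesis unfolding eqs diff using up lo by (simp add: q_def)
qed



lemma block_approx:
  fixes j k c \<beta> :: real and M :: nat
  assumes b: "0 < \<beta>" "\<beta> < 1" and j: "1 \<le> j" "\<beta> * c \<le> j" "j \<le> c" and k: "0 \<le> k"
  shows "\<bar>Lambda ((j+k)/2) - (\<Sum>r<M. ((c - j)/2)^r / fact r * integral {0<..<1} (\<lambda>t. (- ln t)^r * t powr ((c+k)/2) * wt t))\<bar> \<le> ((1-\<beta>)/\<beta>)^M * sqrt pi"
proof -
  define a where "a = (c+k)/2"
  define G where "G r = integral {0<..<1} (\<lambda>t. (- ln t)^r * t powr a * wt t)" for r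
  define cr where "cr r = ((c - j)/2)^r / fact r" for r
  define Q where "Q = ((1-\<beta>)/\<beta>)^M"
  have a: "1/2 \<le> a" using j k by (simp add: a_def)
  have hg: "((\<lambda>t. (- ln t)^r * t powr a * wt t) has_integral G r) {0<..<1}" for r
    unfolding G_def using g_int[OF a] by (rule integrable_integral)
  have hs: "((\<lambda>t. \<Sum>r<M. cr r * ((- ln t)^r * t powr a * wt t)) has_integral (\<Sum>r<M. cr r * G r)) {0<..<1}"
    by (intro has_integral_sum) (auto intro: has_integral_mult_right hg)
  have hL: "((\<lambda>t. t powr ((j+k)/2) * wt t) has_integral Lambda ((j+k)/2)) {0<..<1}"
    by (rule Lambda_int) (use j k in simp)
  have hd: "((\<lambda>t. t powr ((j+k)/2) * wt t - (\<Sum>r<M. cr r * ((- ln t)^r * t powr a * wt t))) has_integral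
      (Lambda ((j+k)/2) - (\<Sum>r<M. cr r * G r))) {0<..<1}"
    by (rule has_integral_diff[OF hL hs])
  have hQ: "((\<lambda>t. Q * wt t) has_integral Q * sqrt pi) {0<..<1}"
    by (rule has_integral_mult_right[OF wt_int])
  have hQ': "((\<lambda>t. - (Q * wt t)) has_integral - (Q * sqrt pi)) {0<..<1}"
    by (rule has_integral_neg[OF hQ])
  have pw: "\<bar>t powr ((j+k)/2) * wt t - (\<Sum>r<M. cr r * ((- ln t)^r * t powr a * wt t))\<bar> \<le> Q * wt t"
    if "t \<in> {0<..<1}" for t
  proof -
    have e: "t powr ((j+k)/2) * wt t - (\<Sum>r<M. cr r * ((- ln t)^r * t powr a * wt t))
        = (t powr ((j+k)/2) - (\<Sum>r<M. ((c - j)/2)^r / fact r * ((- ln t)^r * t powr ((c+k)/2)))) * wt t"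
      unfolding left_diff_distrib sum_distrib_right
      by (intro arg_cong2[where f=minus] refl sum.cong) (simp_all add: cr_def a_def)
    have "\<bar>t powr ((j+k)/2) - (\<Sum>r<M. ((c - j)/2)^r / fact r * ((- ln t)^r * t powr ((c+k)/2)))\<bar> \<le> Q"
      unfolding Q_def by (rule pointwise) (use that b j k in auto)
    then show ?thesis unfolding e abs_mult using wt_nonneg[of t]
      by (simp add: mult_right_mono)
  qed
  have le1: "Lambda ((j+k)/2) - (\<Sum>r<M. cr r * G r) \<le> Q * sqrt pi"
    by (rule has_integral_le[OF hd hQ]) (use pw in force)
  have le2: "- (Q * sqrt pi) \<le> Lambda ((j+k)/2) - (\<Sum>r<M. cr r * G r)"
    by (rule has_integral_le[OF hQ' hd]) (use pw in force)
  have "(\<Sum>r<M. ((c - j)/2)^r / fact r * integral {0<..<1} (\<lambda>t. (- ln t)^r * t powr ((c+k)/2) * wt t)) = (\<Sum>r<M. cr r * G r)"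
    by (simp add: cr_def G_def a_def)
  then show ?thesis using le1 le2 unfolding Q_def by linarith
qed



lemma sqrt_pi_le_e: "sqrt pi \<le> exp 1"
proof -
  have "2 \<le> exp (1::real)" using exp_ge_add_one_self[of 1] by simp
  then have "(2::real)^2 \<le> (exp 1)^2" by (rule power_mono) simp
  then have "4 \<le> (exp (1::real))^2" by simp
  then have "pi \<le> (exp 1)^2" using pi_less_4 by linarith
  then have "sqrt pi \<le> sqrt ((exp 1)^2)" by (rule real_sqrt_le_mono)
  then show ?thesis by simp
qed

lemma idx_props:
  fixes \<beta> :: real and N L :: nat and j :: nat
  assumes b: "0 < \<beta>" "\<beta> < 1" and L: "\<beta>^L * N \<le> 1" "1 \<le> L" and j: "1 \<le> j" "j \<le> N"
  defines "i \<equiv> LEAST i. \<beta>^(i+1) * N \<le> real j"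
  shows "i < L" "\<beta>^(i+1) * N \<le> real j" "real j \<le> \<beta>^i * N"
proof -
  have ex: "\<beta>^((L-1)+1) * N \<le> real j" using L j by simp
  then have "i \<le> L - 1" unfolding i_def by (rule Least_le)
  then show "i < L" using L by linarith
  show "\<beta>^(i+1) * N \<le> real j" unfolding i_def using ex by (rule LeastI)
  show "real j \<le> \<beta>^i * N"
  proof (cases i)
    case 0 then show ?thesis using j by simp
  next
    case (Suc i')
    have "\<not> (\<beta>^(i'+1) * N \<le> real j)"
      using not_less_Least[of i' "\<lambda>i. \<beta>^(i+1) * N \<le> real j"] Suc unfolding i_def by simp
    then show ?thesis using Suc by simp
  qed
qed


lemma rank_sum_le:
  fixes F :: "'i \<Rightarrow> nat \<times> nat \<Rightarrow> real"
  assumes "finite S"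
  shows "vec_space.rank n (mat n nc (\<lambda>jk. \<Sum>p\<in>S. F p jk)) \<le> (\<Sum>p\<in>S. vec_space.rank n (mat n nc (F p)))"
  using assms
proof (induction S rule: finite_induct)
  case empty
  have "mat n nc (\<lambda>jk. \<Sum>p\<in>{}. F p jk) = (0\<^sub>m n nc :: real mat)"
    by (rule eq_matI) simp_all
  then show ?case using vec_space.rank_0I[of n nc] by simp
next
  case (insert x S)
  have "mat n nc (\<lambda>jk. \<Sum>p\<in>insert x S. F p jk) = mat n nc (F x) + mat n nc (\<lambda>jk. \<Sum>p\<in>S. F p jk)"
    by (rule eq_matI) (simp_all add: insert.hyps)
  then have "vec_space.rank n (mat n nc (\<lambda>jk. \<Sum>p\<in>insert x S. F p jk)) \<le>
      vec_space.rank n (mat n nc (F x)) + vec_space.rank n (mat n nc (\<lambda>jk. \<Sum>p\<in>S. F p jk))"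
    using vec_space.rank_subadditive[OF mat_carrier mat_carrier, of n nc "F x" "\<lambda>jk. \<Sum>p\<in>S. F p jk"] by simp
  then show ?case using insert by simp
qed

lemma rank_prod_le1:
  fixes f g :: "nat \<Rightarrow> real"
  shows "vec_space.rank n (mat n nc (\<lambda>(j,k). f j * g k)) \<le> 1"
  by (rule vec_space.rank_le_1_product_entries[of _ n nc f g]) auto

lemma rank_sumprod_le:
  fixes f g :: "'i \<Rightarrow> nat \<Rightarrow> real"
  assumes "finite S"
  shows "vec_space.rank n (mat n nc (\<lambda>(j,k). \<Sum>p\<in>S. f p j * g p k)) \<le> card S"
proof -
  have "vec_space.rank n (mat n nc (\<lambda>(j,k). \<Sum>p\<in>S. f p j * g p k))
     = vec_space.rank n (mat n nc (\<lambda>jk. \<Sum>p\<in>S. (\<lambda>(j,k). f p j * g p k) jk))"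
    by (simp add: split_def)
  also have "\<dots> \<le> (\<Sum>p\<in>S. vec_space.rank n (mat n nc (\<lambda>(j,k). f p j * g p k)))"
    by (rule rank_sum_le[OF assms])
  also have "\<dots> \<le> (\<Sum>p\<in>S. 1)"
    by (rule sum_mono) (rule rank_prod_le1)
  finally show ?thesis by simp
qed

theorem mainTheorem6:
  fixes N :: nat and \<epsilon> \<beta> :: real
  assumes "N > 1" and "0 < \<epsilon>" and "\<epsilon> < exp 1"
    and "1/2 < \<beta>" and "\<beta> < 1"
  defines "K \<equiv> \<lceil>log (1/\<beta>) (real N)\<rceil> * \<lceil>ln (exp 1 / \<epsilon>) / ln (\<beta> / (1 - \<beta>))\<rceil>"
  shows "\<exists>Ht :: real mat. Ht \<in> carrier_mat (N+1) (N+1)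
           \<and> int (vec_space.rank (N+1) Ht) \<le> K + 1
           \<and> (\<forall>j\<le>N. \<forall>k\<le>N. \<bar>Lambda ((real j + real k) / 2) - Ht $$ (j, k)\<bar> \<le> \<epsilon>)"
proof -
  note N = assms(1) and eps = assms(2,3) and bet = assms(4,5)
  have b0: "0 < \<beta>" using bet by simp
  define A where "A = log (1/\<beta>) (real N)"
  define B where "B = ln (exp 1 / \<epsilon>) / ln (\<beta> / (1 - \<beta>))"
  define L where "L = nat \<lceil>A\<rceil>"
  define M where "M = nat \<lceil>B\<rceil>"
  define q where "q = (1-\<beta>)/\<beta>"
  have ib: "1 < 1/\<beta>" using bet by (simp add: field_simps)
  have A0: "0 < A" unfolding A_def log_def using ib N by (intro divide_pos_pos ln_gt_zero) auto
  have lr: "0 < ln (\<beta> / (1 - \<beta>))" using bet by (simp add: field_simps)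
  have le0: "0 < ln (exp 1 / \<epsilon>)" using eps by (simp add: field_simps)
  have B0: "0 < B" unfolding B_def using lr le0 by simp
  have KLM: "K = int L * int M" unfolding K_def L_def M_def A_def[symmetric] B_def[symmetric]
    using A0 B0 by simp
  have "A \<le> real L" unfolding L_def by (simp add: real_nat_ceiling_ge)
  then have "(1/\<beta>) powr A \<le> (1/\<beta>) powr real L" using ib by (intro powr_mono) auto
  moreover have "(1/\<beta>) powr A = real N" unfolding A_def using ib N b0 by (intro powr_log_cancel) auto
  moreover have "(1/\<beta>) powr real L = (1/\<beta>)^L" using b0 by (simp add: powr_realpow)
  ultimately have NL: "real N \<le> (1/\<beta>)^L" by simp
  moreover have "(1/\<beta>)^L = 1 / \<beta>^L" by (rule power_one_over)
  moreover have "0 < \<beta>^L" using b0 by simp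
  ultimately have bL: "\<beta>^L * N \<le> 1" by (simp add: le_divide_eq mult.commute)
  have L1: "1 \<le> L"
  proof (rule ccontr)
    assume "\<not> 1 \<le> L" then have "L = 0" by simp
    then show False using NL N by simp
  qed
  have q0: "0 < q" using bet by (simp add: q_def)
  have lq: "ln q = - ln (\<beta> / (1 - \<beta>))"
  proof -
    have "ln q = ln (1-\<beta>) - ln \<beta>" unfolding q_def using bet by (intro ln_divide_pos) auto
    moreover have "ln (\<beta> / (1 - \<beta>)) = ln \<beta> - ln (1-\<beta>)" using bet by (intro ln_divide_pos) auto
    ultimately show ?thesis by simp
  qed
  have "B \<le> real M" unfolding M_def by (simp add: real_nat_ceiling_ge)
  then have "ln (exp 1 / \<epsilon>) \<le> real M * ln (\<beta> / (1 - \<beta>))" using lr unfolding B_def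
    by (simp add: divide_le_eq)
  then have "real M * ln q \<le> - ln (exp 1 / \<epsilon>)" unfolding lq by simp
  then have "exp (real M * ln q) \<le> exp (- ln (exp 1 / \<epsilon>))" by simp
  moreover have "exp (real M * ln q) = q^M" using q0 by (simp add: exp_of_nat_mult)
  moreover have "exp (- ln (exp 1 / \<epsilon>)) = \<epsilon> / exp 1" using eps by (simp add: exp_minus)
  ultimately have qM: "q^M \<le> \<epsilon> / exp 1" by simp
  have qMe: "q^M * sqrt pi \<le> \<epsilon>"
  proof -
    have "q^M * sqrt pi \<le> (\<epsilon> / exp 1) * exp 1"
      using qM sqrt_pi_le_e q0 eps by (intro mult_mono) auto
    then show ?thesis by simp
  qed
  define idx where "idx j = (LEAST i. \<beta>^(i+1) * N \<le> real j)" for j :: nat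
  define c where "c i = \<beta>^i * N" for i :: nat
  define G where "G i r k = integral {0<..<1} (\<lambda>t. (- ln t)^r * t powr ((c i + real k)/2) * wt t)" for i r :: nat and k :: nat
  define f where "f p j = (if fst p = L then (if j = 0 then 1 else 0)
      else (if j \<noteq> 0 \<and> idx j = fst p then ((c (fst p) - real j)/2)^(snd p) / fact (snd p) else 0))" for p :: "nat \<times> nat" and j :: nat
  define g where "g p k = (if fst p = L then Lambda (real k / 2) else G (fst p) (snd p) k)" for p :: "nat \<times> nat" and k :: nat
  define S where "S = insert (L,0) ({..<L} \<times> {..<M})"
  define Ht where "Ht = mat (N+1) (N+1) (\<lambda>(j,k). \<Sum>p\<in>S. f p j * g p k)"
  have finS: "finite S" unfolding S_def by simp
  have cardS: "card S = L * M + 1" unfolding S_def by (simp add: card_cartesian_product)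
  have rk: "vec_space.rank (N+1) Ht \<le> L * M + 1"
  proof -
    have "vec_space.rank (N+1) Ht \<le> card S"
      unfolding Ht_def by (rule rank_sumprod_le[OF finS])
    then show ?thesis unfolding cardS .
  qed
  have entry: "\<bar>Lambda ((real j + real k) / 2) - Ht $$ (j, k)\<bar> \<le> \<epsilon>" if jk: "j \<le> N" "k \<le> N" for j k
  proof -
    have H: "Ht $$ (j,k) = f (L,0) j * g (L,0) k + (\<Sum>p\<in>{..<L} \<times> {..<M}. f p j * g p k)"
      unfolding Ht_def S_def using jk by (simp add: sum.insert)
    show ?thesis
    proof (cases "j = 0")
      case True
      have "(\<Sum>p\<in>{..<L} \<times> {..<M}. f p j * g p k) = 0"
        by (rule sum.neutral) (auto simp: f_def True)
      then have "Ht $$ (j,k) = Lambda (real k / 2)" using H True by (simp add: f_def g_def)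
      then show ?thesis using True eps by simp
    next
      case False
      then have j1: "1 \<le> j" by simp
      note ip = idx_props[OF b0 bet(2) bL L1 j1 jk(1)]
      define i0 where "i0 = idx j"
      have i0L: "i0 < L" using ip(1) unfolding i0_def idx_def .
      define Ai where "Ai i = (\<Sum>r<M. ((c i - real j)/2)^r / fact r * G i r k)" for i
      have inner: "(\<Sum>r\<in>{..<M}. f (i,r) j * g (i,r) k) = (if i0 = i then Ai i else 0)" if "i < L" for i
        using that False unfolding Ai_def f_def g_def i0_def by (auto intro: sum.cong)
      have "(\<Sum>p\<in>{..<L} \<times> {..<M}. f p j * g p k) = (\<Sum>i\<in>{..<L}. \<Sum>r\<in>{..<M}. f (i,r) j * g (i,r) k)"
        by (subst sum.cartesian_product) (rule sum.cong, auto)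
      also have "\<dots> = (\<Sum>i\<in>{..<L}. if i0 = i then Ai i else 0)"
        by (rule sum.cong) (auto simp: inner)
      also have "\<dots> = Ai i0" using i0L by (simp add: sum.delta)
      finally have "Ht $$ (j,k) = Ai i0" using H False by (simp add: f_def)
      moreover have "\<bar>Lambda ((real j + real k)/2) - Ai i0\<bar> \<le> q^M * sqrt pi"
        unfolding Ai_def G_def q_def
      proof (rule block_approx)
        show "\<beta> * c i0 \<le> real j" using ip(2) unfolding c_def i0_def idx_def by (simp add: mult.assoc)
        show "real j \<le> c i0" using ip(3) unfolding c_def i0_def idx_def by simp
      qed (use b0 bet j1 in auto)
      ultimately show ?thesis using qMe by simp
    qed
  qed
  show ?thesis
  proof (intro exI conjI allI impI)
    show "Ht \<in> carrier_mat (N+1) (N+1)" unfolding Ht_def by simp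
    have "int (vec_space.rank (N+1) Ht) \<le> int (L * M + 1)" using rk by (simp only: of_nat_le_iff)
    then show "int (vec_space.rank (N+1) Ht) \<le> K + 1" unfolding KLM by simp
  qed (rule entry)
qed

end
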